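(* Let $G=(V,E)$ be a finite, connected graph with vertex set $V=\{v_1,\dots,v_n\}$, let $W:V\to\mathbb{R}$ be an arbitrary potential, and let $L=D-A$ be the graph Laplacian, where $D$ is the diagonal degree matrix and $A$ is the adjacency matrix. Suppose $\phi:V\to\mathbb{R}$ and $E\in\mathbb{R}$ satisfy $L\phi+W\phi=E\phi$. Then for all $v\in V$, $$|\phi(v)|\le e^{-\rho_E(v)}\cdot\|\phi\|_{\ell^\infty},$$ where $$\rho_E(v)=\inf\left\{\sum_{i=1}^{\ell}\log\left(1+\frac{(W(v_i)-E)_+}{\deg(v_i)}\right): v=v_1\to v_2\to\dots\to v_\ell \text{ is a path in } G \text{ with } W(v_\ell)\le E\right\},$$ and $(x)_+=\max\{x,0\}$.
   Context: $D\in\mathbb{R}^{n\times n}$ is diagonal with $d_{ii}=\deg(v_i)$; $A_{ij}=1$ if $(v_i,v_j)\in E$ and $0$ otherwise; $(W\phi)(v)=W(v)\phi(v)$. The infimum in $\rho_E(v)$ ranges over all paths starting at $v$ and ending at some vertex in the "allowed region" $\{u\in V: W(u)\le E\}$ (in particular $\rho_E(v)=0$ if $W(v)\le E$). $\|\phi\|_{\ell^\infty}=\max_{u\in V}|\phi(u)|$. *)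

theory Defs
  imports "HOL-Library.Extended_Real"
begin

definition finite_connected_graph :: "'a set \<Rightarrow> ('a \<Rightarrow> 'a \<Rightarrow> bool) \<Rightarrow> bool" where
  "finite_connected_graph V Adj \<longleftrightarrow>
     finite V \<and> V \<noteq> {} \<and>
     (\<forall>u w. Adj u w \<longrightarrow> u \<in> V \<and> w \<in> V) \<and>
     (\<forall>u w. Adj u w \<longrightarrow> Adj w u) \<and>
     (\<forall>u. \<not> Adj u u) \<and>
     (\<forall>u\<in>V. \<forall>w\<in>V. (u, w) \<in> {(x, y). Adj x y}\<^sup>*)"

definition deg :: "'a set \<Rightarrow> ('a \<Rightarrow> 'a \<Rightarrow> bool) \<Rightarrow> 'a \<Rightarrow> nat" where
  "deg V Adj v = card {u \<in> V. Adj v u}"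

definition laplacian :: "'a set \<Rightarrow> ('a \<Rightarrow> 'a \<Rightarrow> bool) \<Rightarrow> ('a \<Rightarrow> real) \<Rightarrow> 'a \<Rightarrow> real" where
  "laplacian V Adj \<phi> v = real (deg V Adj v) * \<phi> v - (\<Sum>u\<in>{u \<in> V. Adj v u}. \<phi> u)"

definition is_path :: "'a set \<Rightarrow> ('a \<Rightarrow> 'a \<Rightarrow> bool) \<Rightarrow> 'a list \<Rightarrow> bool" where
  "is_path V Adj p \<longleftrightarrow> p \<noteq> [] \<and> set p \<subseteq> V \<and> distinct p \<and>
     (\<forall>i. Suc i < length p \<longrightarrow> Adj (p ! i) (p ! Suc i))"

definition pos_part :: "real \<Rightarrow> real" where
  "pos_part x = max x 0"

(* Agmon-type distance rho_E(v), as an infimum in the extended reals (Inf {} = \<infinity>) *)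
definition rho :: "'a set \<Rightarrow> ('a \<Rightarrow> 'a \<Rightarrow> bool) \<Rightarrow> ('a \<Rightarrow> real) \<Rightarrow> real \<Rightarrow> 'a \<Rightarrow> ereal" where
  "rho V Adj W E v = Inf {ereal (\<Sum>i<length p. ln (1 + pos_part (W (p ! i) - E) / real (deg V Adj (p ! i))))
       | p. is_path V Adj p \<and> hd p = v \<and> W (last p) \<le> E}"

definition exp_neg :: "ereal \<Rightarrow> real" where
  "exp_neg r = (case r of ereal x \<Rightarrow> exp (- x) | PInfty \<Rightarrow> 0 | MInfty \<Rightarrow> 0)"

definition sup_norm :: "'a set \<Rightarrow> ('a \<Rightarrow> real) \<Rightarrow> real" where
  "sup_norm V \<phi> = Max ((\<lambda>u. \<bar>\<phi> u\<bar>) ` V)"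

end

theory Submission
  imports Defs Complex_Main
begin

lemma is_path_Cons:
  assumes "is_path V Adj p" "x \<in> V" "x \<notin> set p" "Adj x (hd p)"
  shows "is_path V Adj (x # p)"
  using assms unfolding is_path_def
  apply auto
  subgoal for i by (cases i) (auto simp: hd_conv_nth)
  done

lemma is_path_suffix:
  assumes "is_path V Adj (xs @ ys)" "ys \<noteq> []"
  shows "is_path V Adj ys"
proof -
  have "Adj (ys ! i) (ys ! Suc i)" if "Suc i < length ys" for i
  proof -
    have all: "\<forall>j. Suc j < length (xs@ys) \<longrightarrow> Adj ((xs@ys)!j) ((xs@ys)!Suc j)"
      using assms(1) unfolding is_path_def by blast
    have "Suc (length xs + i) < length (xs@ys)" using that by simp
    then have "Adj ((xs@ys) ! (length xs + i)) ((xs@ys) ! Suc (length xs + i))"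
      using all by blast
    then show ?thesis by (simp add: nth_append)
  qed
  then show ?thesis using assms unfolding is_path_def by auto
qed

lemma is_path_shortcut:
  fixes c :: "'a \<Rightarrow> real"
  assumes "is_path V Adj p" "x \<in> set p" "\<And>w. c w \<ge> 0"
  shows "\<exists>q. is_path V Adj q \<and> hd q = x \<and> last q = last p \<and> sum_list (map c q) \<le> sum_list (map c p)"
proof -
  obtain xs ys where p: "p = xs @ x # ys" using assms(2) by (metis split_list)
  have "is_path V Adj (x # ys)" using is_path_suffix[of V Adj xs "x # ys"] assms(1) p by auto
  moreover have "sum_list (map c (x # ys)) \<le> sum_list (map c p)"
    using p assms(3) by (auto intro!: sum_list_nonneg)
  ultimately show ?thesis using p by (intro exI[of _ "x # ys"]) auto
qed

lemma path_exists:
  assumes "(x, a) \<in> {(x, y). Adj x y}\<^sup>*" "a \<in> V" "\<forall>u w. Adj u w \<longrightarrow> u \<in> V \<and> w \<in> V"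
  shows "\<exists>p. is_path V Adj p \<and> hd p = x \<and> last p = a"
  using assms(1)
proof (induction rule: converse_rtrancl_induct)
  case base
  then show ?case using assms(2) by (intro exI[of _ "[a]"]) (auto simp: is_path_def)
next
  case (step x y)
  then obtain p where p: "is_path V Adj p" "hd p = y" "last p = a" by blast
  have A: "Adj x y" using step by auto
  show ?case
  proof (cases "x \<in> set p")
    case True
    then obtain xs ys where pp: "p = xs @ x # ys" by (metis split_list)
    have "is_path V Adj (x # ys)" using is_path_suffix[of V Adj xs "x # ys"] p pp by auto
    then show ?thesis using pp p by (intro exI[of _ "x # ys"]) auto
  next
    case False
    have "is_path V Adj (x # p)" using is_path_Cons[OF p(1)] A assms(3) p False by auto
    moreover have "p \<noteq> []" using p unfolding is_path_def by auto
    ultimately show ?thesis using p by (intro exI[of _ "x # p"]) auto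
  qed
qed

lemma max_principle:
  fixes r :: "'a \<Rightarrow> real"
  assumes fin: "finite V" and ne: "V \<noteq> {}"
    and eq: "\<forall>v\<in>V. laplacian V Adj \<phi> v + W v * \<phi> v = E * \<phi> v"
    and K: "K \<ge> 0"
    and Kallow: "\<forall>u\<in>V. W u \<le> E \<longrightarrow> \<bar>\<phi> u\<bar> * exp (r u) \<le> K"
    and sub: "\<forall>v\<in>V. \<forall>u\<in>V. W v > E \<longrightarrow> Adj v u \<longrightarrow>
                 r v < r u + ln (1 + (W v - E) / real (deg V Adj v))"
  shows "\<forall>v\<in>V. \<bar>\<phi> v\<bar> * exp (r v) \<le> K"
proof -
  define f where "f v = \<bar>\<phi> v\<bar> * exp (r v)" for v
  define v0 where "v0 = (SOME v. v \<in> V \<and> f v = Max (f ` V))"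
  have "Max (f ` V) \<in> f ` V"
    using Max_in[of "f ` V"] fin ne by auto
  then have "\<exists>v. v \<in> V \<and> f v = Max (f ` V)" by auto
  then have v0: "v0 \<in> V" "f v0 = Max (f ` V)" unfolding v0_def by (metis (mono_tags, lifting) someI_ex)+
  have fmax: "f v \<le> f v0" if "v \<in> V" for v using v0 fin that by auto
  have "f v0 \<le> K"
  proof (rule ccontr)
    assume H: "\<not> f v0 \<le> K"
    then have fpos: "f v0 > 0" using K by auto
    have WE: "W v0 > E" using H Kallow v0 unfolding f_def by force
    define N where "N = {u \<in> V. Adj v0 u}"
    define d where "d = deg V Adj v0"
    have dN: "d = card N" unfolding d_def N_def deg_def by simp
    have finN: "finite N" using fin unfolding N_def by auto
    have eq0: "(real d + W v0 - E) * \<phi> v0 = (\<Sum>u\<in>N. \<phi> u)"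
      using eq v0(1) unfolding laplacian_def d_def N_def by (simp add: algebra_simps)
    show False
    proof (cases "d = 0")
      case True
      then have "N = {}" using dN finN by auto
      then have "\<phi> v0 = 0" using eq0 True WE by simp
      then show False using fpos unfolding f_def by simp
    next
      case False
      then have Nne: "N \<noteq> {}" using dN by auto
      define t where "t = (W v0 - E) / real d"
      have tpos: "t > 0" using False WE unfolding t_def by auto
      have lt: "\<bar>\<phi> u\<bar> < f v0 * exp (- r v0) * (1 + t)" if "u \<in> N" for u
      proof -
        have uV: "u \<in> V" "Adj v0 u" using that unfolding N_def by auto
        have "r v0 < r u + ln (1 + t)" using sub v0(1) uV WE unfolding t_def d_def by auto
        then have "exp (r v0) < exp (r u + ln (1 + t))" by simp
        also have "\<dots> = exp (r u) * (1 + t)" using tpos by (simp add: exp_add)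
        finally have e: "exp (- r u) < exp (- r v0) * (1 + t)"
          by (simp add: exp_minus field_simps)
        have "\<bar>\<phi> u\<bar> = f u * exp (- r u)" unfolding f_def by (simp add: exp_minus)
        also have "\<dots> \<le> f v0 * exp (- r u)" using fmax[OF uV(1)] by simp
        also have "\<dots> < f v0 * (exp (- r v0) * (1 + t))" using e fpos by simp
        finally show ?thesis by simp
      qed
      have "(\<Sum>u\<in>N. \<bar>\<phi> u\<bar>) < (\<Sum>u\<in>N. f v0 * exp (- r v0) * (1 + t))"
        using sum_strict_mono[OF finN Nne lt] by simp
      also have "\<dots> = real d * (1 + t) * \<bar>\<phi> v0\<bar>"
        using dN unfolding f_def by (simp add: exp_minus field_simps)
      also have "\<dots> = (real d + W v0 - E) * \<bar>\<phi> v0\<bar>"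
        using False WE unfolding t_def by (simp add: field_simps)
      also have "\<dots> = \<bar>(real d + W v0 - E) * \<phi> v0\<bar>"
        using WE by (simp add: abs_mult)
      also have "\<dots> = \<bar>\<Sum>u\<in>N. \<phi> u\<bar>" using eq0 by simp
      also have "\<dots> \<le> (\<Sum>u\<in>N. \<bar>\<phi> u\<bar>)" by (rule sum_abs)
      finally show False by simp
    qed
  qed
  then show ?thesis using fmax unfolding f_def by (meson order_trans)
qed

theorem mainTheorem1:
  fixes V :: "'a set" and Adj :: "'a \<Rightarrow> 'a \<Rightarrow> bool"
    and W :: "'a \<Rightarrow> real" and \<phi> :: "'a \<Rightarrow> real" and E :: real
  assumes "finite_connected_graph V Adj"
    and "\<forall>v\<in>V. laplacian V Adj \<phi> v + W v * \<phi> v = E * \<phi> v"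
  shows "\<forall>v\<in>V. \<bar>\<phi> v\<bar> \<le> exp_neg (rho V Adj W E v) * sup_norm V \<phi>"
proof -
  note G = assms(1)[unfolded finite_connected_graph_def]
  have fin: "finite V" and ne: "V \<noteq> {}" and inV: "\<forall>u w. Adj u w \<longrightarrow> u \<in> V \<and> w \<in> V"
    and conn: "\<forall>u\<in>V. \<forall>w\<in>V. (u, w) \<in> {(x, y). Adj x y}\<^sup>*" using G by auto
  define c where "c w = ln (1 + pos_part (W w - E) / real (deg V Adj w))" for w
  have c_nn: "c w \<ge> 0" for w
    unfolding c_def pos_part_def by (intro ln_ge_zero) auto
  have c_pos: "c v = ln (1 + (W v - E) / real (deg V Adj v))" if "W v > E" for v
    using that unfolding c_def pos_part_def by simp
  define P where "P v = {p. is_path V Adj p \<and> hd p = v \<and> W (last p) \<le> E}" for v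
  define S where "S v = (\<lambda>p. sum_list (map c p)) ` P v" for v
  have sumeq: "(\<Sum>i<length p. c (p ! i)) = sum_list (map c p)" for p
    by (simp add: sum_list_sum_nth atLeast0LessThan)
  have rho_eq: "rho V Adj W E v = Inf (ereal ` S v)" for v
  proof -
    have "{ereal (\<Sum>i<length p. ln (1 + pos_part (W (p ! i) - E) / real (deg V Adj (p ! i)))) | p.
            is_path V Adj p \<and> hd p = v \<and> W (last p) \<le> E} = ereal ` S v"
      unfolding S_def P_def using sumeq unfolding c_def by auto
    then show ?thesis unfolding rho_def by simp
  qed
  define M where "M = sup_norm V \<phi>"
  have M: "\<bar>\<phi> u\<bar> \<le> M" if "u \<in> V" for u
    unfolding M_def sup_norm_def using fin that by auto
  show ?thesis
  proof (cases "\<exists>a\<in>V. W a \<le> E")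
    case False
    have "\<forall>v\<in>V. \<bar>\<phi> v\<bar> * exp ((\<lambda>_. 0) v) \<le> 0"
    proof (rule max_principle[OF fin ne assms(2)])
      show "\<forall>v\<in>V. \<forall>u\<in>V. W v > E \<longrightarrow> Adj v u \<longrightarrow>
                 (\<lambda>_. 0::real) v < (\<lambda>_. 0) u + ln (1 + (W v - E) / real (deg V Adj v))"
      proof (intro ballI impI)
        fix v u assume "v \<in> V" "u \<in> V" "W v > E" "Adj v u"
        then have "u \<in> {u \<in> V. Adj v u}" by auto
        then have "deg V Adj v > 0" unfolding deg_def using fin by (auto simp: card_gt_0_iff)
        then show "(\<lambda>_. 0::real) v < (\<lambda>_. 0) u + ln (1 + (W v - E) / real (deg V Adj v))"
          using \<open>W v > E\<close> by (auto intro!: ln_gt_zero)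
      qed
    qed (use False in auto)
    moreover have "P v = {}" for v
      using False unfolding P_def is_path_def by (auto dest!: last_in_set)
    then have "rho V Adj W E v = \<infinity>" for v unfolding rho_eq S_def by (simp add: top_ereal_def)
    ultimately show ?thesis by (simp add: exp_neg_def)
  next
    case True
    then obtain a where a: "a \<in> V" "W a \<le> E" by auto
    have Pne: "P v \<noteq> {}" if vV: "v \<in> V" for v
    proof -
      obtain p where "is_path V Adj p" "hd p = v" "last p = a"
        using path_exists[of v a Adj V] conn a vV inV by blast
      then show ?thesis unfolding P_def using a by auto
    qed
    have S_nn: "s \<ge> 0" if "s \<in> S v" for s v
      using that c_nn unfolding S_def by (auto intro!: sum_list_nonneg)
    have bdd: "bdd_below (S v)" for v using S_nn by (intro bdd_belowI[of _ 0]) blast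
    define R where "R v = Inf (S v)" for v
    have rho_R: "rho V Adj W E v = ereal (R v)" if "v \<in> V" for v
      unfolding rho_eq R_def using ereal_Inf'[OF bdd, of v] Pne[OF that] unfolding S_def by simp
    have R_nn: "R v \<ge> 0" if "v \<in> V" for v
      unfolding R_def using Pne[OF that] S_nn unfolding S_def by (auto intro!: cInf_greatest)
    have R_allow: "R v = 0" if "v \<in> V" "W v \<le> E" for v
    proof -
      have "[v] \<in> P v" using that unfolding P_def is_path_def by auto
      moreover have "c v = 0" using that unfolding c_def pos_part_def by simp
      ultimately have "0 \<in> S v" unfolding S_def by force
      then have "R v \<le> 0" unfolding R_def using bdd by (rule cInf_lower)
      then show ?thesis using R_nn[OF that(1)] by simp
    qed
    have R_sub: "R v \<le> R u + c v" if "v \<in> V" "u \<in> V" "Adj v u" "W v > E" for u v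
    proof -
      have "R v - c v \<le> R u"
        unfolding R_def[of u]
      proof (rule cInf_greatest)
        show "S u \<noteq> {}" using Pne[OF that(2)] unfolding S_def by simp
      next
        fix s assume "s \<in> S u"
        then obtain p where p: "p \<in> P u" "s = sum_list (map c p)" unfolding S_def by auto
        have "\<exists>s'\<in>S v. s' \<le> s + c v"
        proof (cases "v \<in> set p")
          case True
          then obtain q where q: "is_path V Adj q" "hd q = v" "last q = last p"
              "sum_list (map c q) \<le> sum_list (map c p)"
            using is_path_shortcut[of V Adj p v c] p c_nn unfolding P_def by auto
          then have "q \<in> P v" using p unfolding P_def by auto
          then show ?thesis using q p c_nn[of v] unfolding S_def by force
        next
          case False
          have pp: "is_path V Adj p" "hd p = u" "W (last p) \<le> E" using p unfolding P_def by auto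
          then have "p \<noteq> []" unfolding is_path_def by auto
          have "is_path V Adj (v # p)" using is_path_Cons[OF pp(1) that(1) False] pp that by simp
          then have "v # p \<in> P v" using pp \<open>p \<noteq> []\<close> unfolding P_def by auto
          then show ?thesis using p unfolding S_def by force
        qed
        then obtain s' where "s' \<in> S v" "s' \<le> s + c v" by auto
        moreover have "R v \<le> s'" unfolding R_def using \<open>s' \<in> S v\<close> bdd by (rule cInf_lower)
        ultimately show "R v - c v \<le> s" by simp
      qed
      then show ?thesis by simp
    qed
    have M0: "M \<ge> 0" using M[OF a(1)] by simp
    have eps: "\<bar>\<phi> v\<bar> * exp (R v) \<le> M * exp (e * R v)" if "v \<in> V" "0 < e" "e < 1" for v e
    proof -
      have "\<forall>v\<in>V. \<bar>\<phi> v\<bar> * exp ((\<lambda>w. (1 - e) * R w) v) \<le> M"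
      proof (rule max_principle[OF fin ne assms(2) M0])
        show "\<forall>u\<in>V. W u \<le> E \<longrightarrow> \<bar>\<phi> u\<bar> * exp ((1 - e) * R u) \<le> M"
          using R_allow M by simp
        show "\<forall>v\<in>V. \<forall>u\<in>V. W v > E \<longrightarrow> Adj v u \<longrightarrow>
                 (1 - e) * R v < (1 - e) * R u + ln (1 + (W v - E) / real (deg V Adj v))"
        proof (intro ballI impI)
          fix v u assume vu: "v \<in> V" "u \<in> V" "W v > E" "Adj v u"
          then have "u \<in> {u \<in> V. Adj v u}" by auto
          then have "deg V Adj v > 0" unfolding deg_def using fin by (auto simp: card_gt_0_iff)
          then have cpos: "c v > 0" using c_pos[OF vu(3)] vu(3) by (auto intro!: ln_gt_zero)
          have "(1 - e) * R v \<le> (1 - e) * (R u + c v)"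
            using R_sub[OF vu(1,2,4,3)] that by (intro mult_left_mono) auto
          also have "\<dots> < (1 - e) * R u + c v" using cpos that by (simp add: algebra_simps)
          finally show "(1 - e) * R v < (1 - e) * R u + ln (1 + (W v - E) / real (deg V Adj v))"
            using c_pos[OF vu(3)] by simp
        qed
      qed
      then have "\<bar>\<phi> v\<bar> * exp ((1 - e) * R v) \<le> M" using that by auto
      then have "\<bar>\<phi> v\<bar> * exp ((1 - e) * R v) * exp (e * R v) \<le> M * exp (e * R v)"
        by (intro mult_right_mono) auto
      moreover have "exp ((1 - e) * R v) * exp (e * R v) = exp (R v)"
        by (simp add: exp_add[symmetric] algebra_simps)
      ultimately show ?thesis by (simp add: mult.assoc)
    qed
    have main: "\<bar>\<phi> v\<bar> * exp (R v) \<le> M" if "v \<in> V" for v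
    proof -
      have "((\<lambda>e. M * exp (e * R v)) \<longlongrightarrow> M * exp (0 * R v)) (at_right 0)"
        by (intro tendsto_intros)
      then have l1: "((\<lambda>e. M * exp (e * R v)) \<longlongrightarrow> M) (at_right 0)" by simp
      have "\<forall>\<^sub>F e in at_right (0::real). 0 < e \<and> e < 1"
        by (simp add: eventually_at_right_field) (intro exI[of _ 1], auto)
      then have ev: "\<forall>\<^sub>F e in at_right (0::real). \<bar>\<phi> v\<bar> * exp (R v) \<le> M * exp (e * R v)"
        by eventually_elim (use eps[OF that] in auto)
      show ?thesis using tendsto_le[OF _ l1 tendsto_const ev] by simp
    qed
    show ?thesis
    proof
      fix v assume v: "v \<in> V"
      have "\<bar>\<phi> v\<bar> = \<bar>\<phi> v\<bar> * exp (R v) * exp (- R v)" by (simp add: exp_minus)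
      also have "\<dots> \<le> M * exp (- R v)" using main[OF v] by (intro mult_right_mono) auto
      finally show "\<bar>\<phi> v\<bar> \<le> exp_neg (rho V Adj W E v) * sup_norm V \<phi>"
        using rho_R[OF v] unfolding M_def exp_neg_def by (simp add: mult.commute)
    qed
  qed
qed

end
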